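(* If $(X,\Pi)$ is a finite strictly quasiconvex quasisupermodular aggregative game for which a fESS exists, then imitation is not subject to a money pump.
   Context: An aggregative game $(X,\Pi)$ consists of: a totally ordered action set $X$ (finite here) and a totally ordered set $Z$; a symmetric aggregator $a:X\times X\to Z$ ($a(x,y)=a(y,x)$) that is monotone increasing (if $x''\ge x'$, $y''\ge y'$ and $(x'',y'')\neq(x',y')$ then $a(x'',y'')>a(x',y')$); and $\Pi:X\times Z\to\mathbb{R}$, with underlying symmetric two-player game payoff $\pi(x,y)=\Pi(x,a(x,y))$. Quasisupermodular: for all $z''>z'$ and $x''>x'$, $\Pi(x'',z')-\Pi(x',z')\ge0\Rightarrow\Pi(x'',z'')-\Pi(x',z'')\ge0$ and the same with $>0$ in both places. Strictly quasiconvex: for all $x<x'<x''$ and $z$, $\Pi(x',z)<\max\{\Pi(x,z),\Pi(x'',z)\}$. fESS: $x^*$ with $\Pi(x^*,a(x^*,x))\ge\Pi(x,a(x^*,x))$ for all $x\in X$. Relative payoff: $\Delta(x,y)=\pi(x,y)-\pi(y,x)$. Imitate-the-best: given initial $y_0\in X$ and any opponent sequence $(x_t)_{t\ge0}$, $y_t=x_{t-1}$ if $\Delta(x_{t-1},y_{t-1})>0$ and $y_t=y_{t-1}$ otherwise. Imitation is not subject to a money pump if there is $M\in\mathbb{R}_+$ such that for every $y_0\in X$ and every sequence $(x_t)$, $\limsup_{T\to\infty}\sum_{t=0}^T\Delta(x_t,y_t)\le M$. *)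

theory Defs
  imports Complex_Main "HOL-Library.Liminf_Limsup" "HOL-Library.Extended_Real"
begin

text \<open>Action set X = the finite linearly ordered type 'x; Z = the linearly ordered type 'z.
  Aggregator a :: 'x => 'x => 'z, payoff Pi :: 'x => 'z => real.\<close>

definition symmetric_aggregator :: "('x \<Rightarrow> 'x \<Rightarrow> 'z) \<Rightarrow> bool" where
  "symmetric_aggregator a \<longleftrightarrow> (\<forall>x y. a x y = a y x)"

definition monotone_aggregator :: "('x::linorder \<Rightarrow> 'x \<Rightarrow> 'z::linorder) \<Rightarrow> bool" where
  "monotone_aggregator a \<longleftrightarrow>
     (\<forall>x' x'' y' y''. x'' \<ge> x' \<and> y'' \<ge> y' \<and> (x'', y'') \<noteq> (x', y') \<longrightarrow> a x'' y'' > a x' y')"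

definition quasisupermodular :: "('x::linorder \<Rightarrow> 'z::linorder \<Rightarrow> real) \<Rightarrow> bool" where
  "quasisupermodular Pi \<longleftrightarrow>
     (\<forall>z' z'' x' x''. z'' > z' \<and> x'' > x' \<longrightarrow>
        (Pi x'' z' - Pi x' z' \<ge> 0 \<longrightarrow> Pi x'' z'' - Pi x' z'' \<ge> 0) \<and>
        (Pi x'' z' - Pi x' z' > 0 \<longrightarrow> Pi x'' z'' - Pi x' z'' > 0))"

definition strictly_quasiconvex :: "('x::linorder \<Rightarrow> 'z \<Rightarrow> real) \<Rightarrow> bool" where
  "strictly_quasiconvex Pi \<longleftrightarrow>
     (\<forall>x x' x'' z. x < x' \<and> x' < x'' \<longrightarrow> Pi x' z < max (Pi x z) (Pi x'' z))"

definition is_fESS :: "('x \<Rightarrow> 'x \<Rightarrow> 'z) \<Rightarrow> ('x \<Rightarrow> 'z \<Rightarrow> real) \<Rightarrow> 'x \<Rightarrow> bool" where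
  "is_fESS a Pi xs \<longleftrightarrow> (\<forall>x. Pi xs (a xs x) \<ge> Pi x (a xs x))"

definition game_payoff :: "('x \<Rightarrow> 'x \<Rightarrow> 'z) \<Rightarrow> ('x \<Rightarrow> 'z \<Rightarrow> real) \<Rightarrow> 'x \<Rightarrow> 'x \<Rightarrow> real" where
  "game_payoff a Pi x y = Pi x (a x y)"

definition rel_payoff :: "('x \<Rightarrow> 'x \<Rightarrow> 'z) \<Rightarrow> ('x \<Rightarrow> 'z \<Rightarrow> real) \<Rightarrow> 'x \<Rightarrow> 'x \<Rightarrow> real" where
  "rel_payoff a Pi x y = game_payoff a Pi x y - game_payoff a Pi y x"

primrec imitation :: "('x \<Rightarrow> 'x \<Rightarrow> 'z) \<Rightarrow> ('x \<Rightarrow> 'z \<Rightarrow> real) \<Rightarrow> 'x \<Rightarrow> (nat \<Rightarrow> 'x) \<Rightarrow> nat \<Rightarrow> 'x" where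
  "imitation a Pi y0 xs 0 = y0"
| "imitation a Pi y0 xs (Suc t) =
     (if rel_payoff a Pi (xs t) (imitation a Pi y0 xs t) > 0 then xs t
      else imitation a Pi y0 xs t)"

definition no_money_pump :: "('x \<Rightarrow> 'x \<Rightarrow> 'z) \<Rightarrow> ('x \<Rightarrow> 'z \<Rightarrow> real) \<Rightarrow> bool" where
  "no_money_pump a Pi \<longleftrightarrow>
     (\<exists>M::real. M \<ge> 0 \<and> (\<forall>y0 xs.
        limsup (\<lambda>T. ereal (\<Sum>t\<le>T. rel_payoff a Pi (xs t) (imitation a Pi y0 xs t))) \<le> ereal M))"

end

theory Submission
  imports Defs
begin

lemma relp_antisym:
  assumes "symmetric_aggregator a"
  shows "rel_payoff a Pi y x = - rel_payoff a Pi x y"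
  using assms by (simp add: rel_payoff_def game_payoff_def symmetric_aggregator_def)

lemma up1:
  fixes a :: "'x::linorder \<Rightarrow> 'x \<Rightarrow> 'z::linorder" and Pi :: "'x \<Rightarrow> 'z \<Rightarrow> real"
  assumes sym: "symmetric_aggregator a" and mon: "monotone_aggregator a"
    and q: "quasisupermodular Pi" and c: "strictly_quasiconvex Pi"
    and xy: "x < y" and yy: "y < y'" and d: "rel_payoff a Pi y x \<ge> 0"
  shows "rel_payoff a Pi y' x > 0"
proof -
  have s: "\<And>u v. a u v = a v u" using sym unfolding symmetric_aggregator_def by blast
  have z: "a x y < a x y'"
    using mon[unfolded monotone_aggregator_def, rule_format, of x x y y'] yy by (simp add: less_imp_le)
  have d1: "Pi y (a x y) - Pi x (a x y) \<ge> 0"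
    using d s[of y x] by (simp add: rel_payoff_def game_payoff_def)
  have d2: "Pi y (a x y') - Pi x (a x y') \<ge> 0"
    using q[unfolded quasisupermodular_def, rule_format, of "a x y" "a x y'" x y] z xy d1 by blast
  have d3: "Pi y (a x y') < max (Pi x (a x y')) (Pi y' (a x y'))"
    using c[unfolded strictly_quasiconvex_def, rule_format, of x y y' "a x y'"] xy yy by blast
  have "Pi y' (a x y') - Pi x (a x y') > 0"
    using d2 d3 by (simp add: max_def split: if_splits)
  then show ?thesis using s[of y' x] by (simp add: rel_payoff_def game_payoff_def)
qed

lemma up2:
  fixes a :: "'x::linorder \<Rightarrow> 'x \<Rightarrow> 'z::linorder" and Pi :: "'x \<Rightarrow> 'z \<Rightarrow> real"
  assumes sym: "symmetric_aggregator a" and mon: "monotone_aggregator a"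
    and q: "quasisupermodular Pi" and c: "strictly_quasiconvex Pi"
    and xx: "x < x'" and xy: "x' < y" and d: "rel_payoff a Pi y x \<ge> 0"
  shows "rel_payoff a Pi y x' > 0"
proof -
  have s: "\<And>u v. a u v = a v u" using sym unfolding symmetric_aggregator_def by blast
  have z: "a x y < a x' y"
    using mon[unfolded monotone_aggregator_def, rule_format, of x x' y y] xx by (simp add: less_imp_le)
  have d1: "Pi y (a x y) - Pi x (a x y) \<ge> 0"
    using d s[of y x] by (simp add: rel_payoff_def game_payoff_def)
  have d3: "Pi x' (a x y) < max (Pi x (a x y)) (Pi y (a x y))"
    using c[unfolded strictly_quasiconvex_def, rule_format, of x x' y "a x y"] xx xy by blast
  have d2: "Pi y (a x y) - Pi x' (a x y) > 0"
    using d1 d3 by (simp add: max_def split: if_splits)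
  have "Pi y (a x' y) - Pi x' (a x' y) > 0"
    using q[unfolded quasisupermodular_def, rule_format, of "a x y" "a x' y" x' y] z xy d2 by blast
  then show ?thesis using s[of y x'] by (simp add: rel_payoff_def game_payoff_def)
qed

lemma beat_trans:
  fixes a :: "'x::linorder \<Rightarrow> 'x \<Rightarrow> 'z::linorder" and Pi :: "'x \<Rightarrow> 'z \<Rightarrow> real"
  assumes sym: "symmetric_aggregator a" and mon: "monotone_aggregator a"
    and q: "quasisupermodular Pi" and c: "strictly_quasiconvex Pi"
    and ab: "rel_payoff a Pi p1 p2 > 0" and bc: "rel_payoff a Pi p2 p3 > 0"
  shows "rel_payoff a Pi p1 p3 > 0"
proof -
  let ?D = "rel_payoff a Pi"
  have U1: "\<And>x y y'. x < y \<Longrightarrow> y < y' \<Longrightarrow> ?D y x \<ge> 0 \<Longrightarrow> ?D y' x > 0"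
    using up1[OF sym mon q c] by blast
  have U2: "\<And>x x' y. x < x' \<Longrightarrow> x' < y \<Longrightarrow> ?D y x \<ge> 0 \<Longrightarrow> ?D y x' > 0"
    using up2[OF sym mon q c] by blast
  have A: "\<And>x y. ?D y x = - ?D x y" using relp_antisym[OF sym] by blast
  have A0: "\<And>x. ?D x x = 0" using A by (metis add.inverse_inverse neg_equal_zero)
  show ?thesis
  proof (cases "p1 = p2 \<or> p2 = p3 \<or> p1 = p3")
    case True
    then show ?thesis using ab bc A A0
      by (metis less_irrefl neg_less_0_iff_less order.asym)
  next
    case False
    hence ne: "p1 \<noteq> p2" "p2 \<noteq> p3" "p1 \<noteq> p3" by auto
    consider "p3 < p2" "p2 < p1" | "p1 < p2" "p2 < p3" | "p2 < p3" "p3 < p1"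
      | "p2 < p1" "p1 < p3" | "p1 < p3" "p3 < p2" | "p3 < p1" "p1 < p2"
      using ne by (metis neqE order.strict_trans)
    then show ?thesis
    proof cases
      case 1
      show ?thesis using U1[OF 1(1) 1(2)] bc by linarith
    next
      case 2
      show ?thesis
      proof (rule ccontr)
        assume "\<not> ?thesis"
        hence "?D p3 p1 \<ge> 0" using A[of p1 p3] by linarith
        from U2[OF 2(1) 2(2) this] show False using bc A[of p2 p3] by linarith
      qed
    next
      case 3
      show ?thesis using U2[OF 3(1) 3(2)] ab A[of p2 p1] by linarith
    next
      case 4
      have "?D p1 p2 \<ge> 0" using ab by linarith
      from U1[OF 4(1) 4(2) this] show ?thesis using bc A[of p2 p3] A[of p1 p3] by linarith
    next
      case 5
      show ?thesis
      proof (rule ccontr)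
        assume "\<not> ?thesis"
        hence "?D p3 p1 \<ge> 0" using A[of p1 p3] by linarith
        from U1[OF 5(1) 5(2) this] show False using ab A[of p1 p2] by linarith
      qed
    next
      case 6
      have "?D p2 p3 \<ge> 0" using bc by linarith
      from U2[OF 6(1) 6(2) this] show ?thesis using ab A[of p1 p2] by linarith
    qed
  qed
qed

theorem proposition7:
  fixes a :: "'x::{finite,linorder} \<Rightarrow> 'x \<Rightarrow> 'z::linorder"
    and Pi :: "'x \<Rightarrow> 'z \<Rightarrow> real"
  assumes "symmetric_aggregator a"
    and "monotone_aggregator a"
    and "quasisupermodular Pi"
    and "strictly_quasiconvex Pi"
    and "\<exists>xstar. is_fESS a Pi xstar"
  shows "no_money_pump a Pi"
proof -
  let ?D = "rel_payoff a Pi"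
  have tr: "\<And>p q r. ?D p q > 0 \<Longrightarrow> ?D q r > 0 \<Longrightarrow> ?D p r > 0"
    using beat_trans[OF assms(1-4)] by blast
  have A: "\<And>x y. ?D y x = - ?D x y" using relp_antisym[OF assms(1)] by blast
  have irr: "\<And>x. \<not> ?D x x > 0" using A by (metis add.inverse_inverse neg_equal_zero less_irrefl)
  define r where "r x = card {w. ?D x w > 0}" for x
  have rmono: "r x < r y" if "?D y x > 0" for x y
  proof -
    have "{w. ?D x w > 0} \<subset> {w. ?D y w > 0}"
      using tr[OF that] irr[of x] that by auto
    then show ?thesis unfolding r_def by (simp add: psubset_card_mono)
  qed
  have rle: "r x \<le> card (UNIV :: 'x set)" for x
    unfolding r_def by (simp add: card_mono)
  define K where "K = (\<Sum>x\<in>UNIV. \<Sum>y\<in>UNIV. \<bar>?D x y\<bar>)"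
  have DK: "?D x y \<le> K" for x y
  proof -
    have "?D x y \<le> \<bar>?D x y\<bar>" by simp
    also have "\<dots> \<le> (\<Sum>y\<in>UNIV. \<bar>?D x y\<bar>)"
      by (rule member_le_sum) auto
    also have "\<dots> \<le> K" unfolding K_def
      by (rule member_le_sum[where f = "\<lambda>x. \<Sum>y\<in>UNIV. \<bar>?D x y\<bar>"]) (auto intro: sum_nonneg)
    finally show ?thesis .
  qed
  have K0: "K \<ge> 0" unfolding K_def by (auto intro: sum_nonneg)
  define M where "M = K * real (card (UNIV :: 'x set))"
  have M0: "M \<ge> 0" unfolding M_def using K0 by simp
  have bound: "(\<Sum>t<T. ?D (xs t) (imitation a Pi y0 xs t))
      \<le> K * (real (r (imitation a Pi y0 xs T)) - real (r (imitation a Pi y0 xs 0)))" for y0 xs T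
  proof (induction T)
    case 0
    then show ?case by simp
  next
    case (Suc T)
    let ?y = "imitation a Pi y0 xs"
    show ?case
    proof (cases "?D (xs T) (?y T) > 0")
      case True
      hence "r (?y T) < r (?y (Suc T))" using rmono by simp
      hence "real (r (?y T)) + 1 \<le> real (r (?y (Suc T)))" by linarith
      hence "K * (real (r (?y T)) + 1) \<le> K * real (r (?y (Suc T)))"
        using K0 by (intro mult_left_mono)
      then show ?thesis using Suc.IH DK[of "xs T" "?y T"]
        by (simp add: algebra_simps)
    next
      case False
      then show ?thesis using Suc.IH by simp
    qed
  qed
  have bd2: "(\<Sum>t\<le>T. ?D (xs t) (imitation a Pi y0 xs t)) \<le> M" for y0 xs T
  proof -
    have "(\<Sum>t\<le>T. ?D (xs t) (imitation a Pi y0 xs t)) = (\<Sum>t<Suc T. ?D (xs t) (imitation a Pi y0 xs t))"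
      using lessThan_Suc_atMost by presburger
    also have "\<dots> \<le> K * (real (r (imitation a Pi y0 xs (Suc T))) - real (r (imitation a Pi y0 xs 0)))"
      by (rule bound)
    also have "\<dots> \<le> K * real (card (UNIV :: 'x set))"
      using K0 rle[of "imitation a Pi y0 xs (Suc T)"] by (intro mult_left_mono) auto
    finally show ?thesis unfolding M_def .
  qed
  show ?thesis unfolding no_money_pump_def
  proof (intro exI[of _ M] conjI allI)
    show "M \<ge> 0" by (rule M0)
    fix y0 xs
    show "limsup (\<lambda>T. ereal (\<Sum>t\<le>T. ?D (xs t) (imitation a Pi y0 xs t))) \<le> ereal M"
      by (rule Limsup_bounded) (simp add: bd2)
  qed
qed

end
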